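(* Let $\mathbb{K}$ be a field and $s\geq 3$ an integer. Let $f=\sum_{i=0}^n a_ix_s^i\in\mathbb{K}[x_1,\ldots,x_s]$ with $n\geq 2$, $a_0,\ldots,a_n\in\mathbb{K}[x_1,\ldots,x_{s-1}]$, $a_0a_n\neq 0$. Assume that $f$ has no nonconstant factor in $\mathbb{K}[x_1,\ldots,x_{s-1}]$. If there exists an index $j$ with $0\leq j\leq n-1$ such that $$\deg_{s-1}a_j>\max_{i\neq j}\{\deg_{s-1}a_i+(j-i)\deg_{s-1}a_n\},$$ then $f$ is a product of at most $n-j$ irreducible polynomials over $\mathbb{K}[x_1,\ldots,x_{s-1}]$. In particular, if $j=n-1$, then $f$ is irreducible over $\mathbb{K}[x_1,\ldots,x_{s-1}]$.
   Context: For a polynomial $g\in\mathbb{K}[x_1,\ldots,x_r]$, $\deg_r g$ denotes the degree of $g$ viewed as a polynomial in $x_r$ with coefficients in $\mathbb{K}[x_1,\ldots,x_{r-1}]$. $f$ is regarded as a polynomial in $x_s$ with coefficients in $\mathbb{K}[x_1,\ldots,x_{s-1}]$, and "a product of at most $k$ irreducible polynomials over $\mathbb{K}[x_1,\ldots,x_{s-1}]$" means that its factorization into irreducibles of $\mathbb{K}[x_1,\ldots,x_{s-1}][x_s]$ has at most $k$ factors counted with multiplicities. *)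

theory Defs
  imports "HOL-Computational_Algebra.Polynomial" "HOL-Library.Poly_Mapping"
          "HOL-Computational_Algebra.Factorial_Ring"
begin

(* K[x_1,...,x_m] (m = CARD('v) \<ge> 1): monomials are exponent maps 'v to nat (finite support).
  K[x_1,...,x_{s-1}] is modelled as (K[x_1,...,x_{s-2}])[x_{s-1}], i.e. type 'v mpoly' poly,
  and K[x_1,...,x_s] as ('k,'v) mpoly' poly poly (outer variable x_s). *)

type_synonym ('k, 'v) mpoly' = "('v \<Rightarrow>\<^sub>0 nat) \<Rightarrow>\<^sub>0 'k"

definition const_D :: "'k::zero \<Rightarrow> ('k, 'v) mpoly' poly" where
  "const_D c = [: Poly_Mapping.single 0 c :]"

end

theory Submission
  imports Defs
begin

definition wt :: "nat \<Rightarrow> 'a::zero poly poly \<Rightarrow> nat \<Rightarrow> int" where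
  "wt D g i = int (degree (coeff g i)) - int i * int D"

lemma coeff_sum_zero:
  fixes t :: "nat \<Rightarrow> 'a::comm_ring_1 poly"
  assumes "\<forall>i\<in>S. t i = 0 \<or> degree (t i) < M"
  shows "coeff (sum t S) M = 0"
  using assms by (auto simp: coeff_sum coeff_eq_0 intro!: sum.neutral)

lemma wt_term_bound:
  fixes a b :: "'a::idom poly poly"
  assumes Ma: "\<forall>i. coeff a i \<noteq> 0 \<longrightarrow> wt D a i \<le> Wa"
    and Mb: "\<forall>i. coeff b i \<noteq> 0 \<longrightarrow> wt D b i \<le> Wb"
    and "coeff a i * coeff b l \<noteq> 0"
  shows "int (degree (coeff a i * coeff b l)) \<le> Wa + Wb + int (i + l) * int D"
proof -
  have na: "coeff a i \<noteq> 0" and nb: "coeff b l \<noteq> 0" using assms(3) by auto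
  have "degree (coeff a i * coeff b l) = degree (coeff a i) + degree (coeff b l)"
    using na nb by (simp add: degree_mult_eq)
  moreover have "wt D a i \<le> Wa" "wt D b l \<le> Wb" using Ma Mb na nb by auto
  ultimately show ?thesis unfolding wt_def by (simp add: algebra_simps)
qed

lemma coeff_mult_bound:
  fixes a b :: "'a::idom poly poly"
  assumes Ma: "\<forall>i. coeff a i \<noteq> 0 \<longrightarrow> wt D a i \<le> Wa"
    and Mb: "\<forall>i. coeff b i \<noteq> 0 \<longrightarrow> wt D b i \<le> Wb"
    and "coeff (a * b) K \<noteq> 0"
  shows "wt D (a * b) K \<le> Wa + Wb"
proof -
  have z: "coeff (coeff (a * b) K) M = 0" if "int M > Wa + Wb + int K * int D" for M
    unfolding coeff_mult
  proof (rule coeff_sum_zero, intro ballI)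
    fix i assume "i \<in> {..K}"
    hence "i + (K - i) = K" by auto
    show "coeff a i * coeff b (K - i) = 0 \<or> degree (coeff a i * coeff b (K - i)) < M"
      using wt_term_bound[OF Ma Mb, of i "K - i"] \<open>i + (K - i) = K\<close> that by force
  qed
  define p where "p = coeff (a * b) K"
  have "coeff p (degree p) \<noteq> 0" using assms(3) p_def by simp
  hence "\<not> int (degree p) > Wa + Wb + int K * int D" using z p_def by blast
  thus ?thesis unfolding wt_def p_def by simp
qed

lemma coeff_mult_top:
  fixes a b :: "'a::idom poly poly"
  assumes na: "coeff a ka \<noteq> 0" and nb: "coeff b kb \<noteq> 0"
    and Ma: "\<forall>i. coeff a i \<noteq> 0 \<longrightarrow> wt D a i \<le> wt D a ka"
    and Mb: "\<forall>i. coeff b i \<noteq> 0 \<longrightarrow> wt D b i \<le> wt D b kb"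
    and strict: "\<forall>i l. i + l = ka + kb \<longrightarrow> i \<noteq> ka \<longrightarrow> coeff a i \<noteq> 0 \<longrightarrow> coeff b l \<noteq> 0
        \<longrightarrow> wt D a i + wt D b l < wt D a ka + wt D b kb"
  shows "coeff (a * b) (ka + kb) \<noteq> 0 \<and> wt D (a * b) (ka + kb) = wt D a ka + wt D b kb"
proof -
  define K where "K = ka + kb"
  define t where "t i = coeff a i * coeff b (K - i)" for i
  define N where "N = degree (coeff a ka) + degree (coeff b kb)"
  have tka: "t ka = coeff a ka * coeff b kb" unfolding t_def K_def by simp
  have degtka: "degree (t ka) = N" using na nb tka N_def by (simp add: degree_mult_eq)
  have ctka: "coeff (t ka) N \<noteq> 0" using na nb tka N_def
    by (simp add: coeff_mult_degree_sum)
  have WN: "wt D a ka + wt D b kb + int K * int D = int N"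
    unfolding wt_def N_def K_def by (simp add: algebra_simps)
  have others: "t i = 0 \<or> degree (t i) < N" if "i \<in> {..K} - {ka}" for i
  proof (cases "t i = 0")
    case False
    hence n1: "coeff a i \<noteq> 0" "coeff b (K - i) \<noteq> 0" unfolding t_def by auto
    have "i + (K - i) = ka + kb" "i \<noteq> ka" using that K_def by auto
    hence s: "wt D a i + wt D b (K - i) < wt D a ka + wt D b kb" using strict n1 by blast
    have "degree (t i) = degree (coeff a i) + degree (coeff b (K - i))"
      unfolding t_def using n1 by (simp add: degree_mult_eq)
    hence "int (degree (t i)) = wt D a i + wt D b (K - i) + int K * int D"
      unfolding wt_def using that by (auto simp: algebra_simps of_nat_diff)
    hence "int (degree (t i)) < int N" using s WN by linarith
    thus ?thesis by simp
  qed simp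
  have split: "coeff (a * b) K = t ka + sum t ({..K} - {ka})"
    unfolding coeff_mult t_def[symmetric]
    by (subst sum.remove[of _ ka]) (auto simp: K_def)
  have c0: "coeff (sum t ({..K} - {ka})) N = 0"
    by (rule coeff_sum_zero) (use others in blast)
  have cN: "coeff (coeff (a * b) K) N \<noteq> 0" using split c0 ctka by simp
  have cM: "coeff (coeff (a * b) K) M = 0" if "M > N" for M
  proof -
    have "coeff (t ka) M = 0" using degtka that by (simp add: coeff_eq_0)
    moreover have "coeff (sum t ({..K} - {ka})) M = 0"
      by (rule coeff_sum_zero) (use others that in fastforce)
    ultimately show ?thesis using split by simp
  qed
  have ne: "coeff (a * b) K \<noteq> 0" using cN by auto
  have "degree (coeff (a * b) K) = N"
  proof (rule antisym)
    show "degree (coeff (a * b) K) \<le> N" using cM by (meson degree_le leI)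
    show "N \<le> degree (coeff (a * b) K)" using cN by (simp add: le_degree)
  qed
  hence "wt D (a * b) K = int N - int K * int D" unfolding wt_def by simp
  thus ?thesis using ne WN K_def by simp
qed

definition utop :: "nat \<Rightarrow> 'a::zero poly poly \<Rightarrow> nat \<Rightarrow> bool" where
  "utop D g k \<longleftrightarrow> coeff g k \<noteq> 0 \<and> (\<forall>i. i \<noteq> k \<and> coeff g i \<noteq> 0 \<longrightarrow> wt D g i < wt D g k)"

lemma exists_top:
  fixes g :: "'a::zero poly poly"
  assumes "g \<noteq> 0"
  shows "\<exists>W. (\<exists>i. coeff g i \<noteq> 0 \<and> wt D g i = W) \<and> (\<forall>i. coeff g i \<noteq> 0 \<longrightarrow> wt D g i \<le> W)"
proof -
  define S where "S = {i. coeff g i \<noteq> 0}"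
  have fin: "finite S" unfolding S_def
    by (rule finite_subset[of _ "{..degree g}"]) (auto intro: le_degree)
  have ne: "degree g \<in> S" using assms S_def by simp
  define W where "W = Max (wt D g ` S)"
  have "W \<in> wt D g ` S" unfolding W_def using fin ne by (intro Max_in) auto
  moreover have "\<forall>i\<in>S. wt D g i \<le> W" unfolding W_def using fin by auto
  ultimately show ?thesis unfolding S_def by blast
qed

lemma top_set:
  fixes g :: "'a::zero poly poly"
  assumes "g \<noteq> 0"
  obtains W where "finite {i. coeff g i \<noteq> 0 \<and> wt D g i = W}"
    "{i. coeff g i \<noteq> 0 \<and> wt D g i = W} \<noteq> {}"
    "\<forall>i. coeff g i \<noteq> 0 \<longrightarrow> wt D g i \<le> W"
proof -
  obtain W where "\<exists>i. coeff g i \<noteq> 0 \<and> wt D g i = W" "\<forall>i. coeff g i \<noteq> 0 \<longrightarrow> wt D g i \<le> W"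
    using exists_top[OF assms] by blast
  moreover have "finite {i. coeff g i \<noteq> 0 \<and> wt D g i = W}"
    by (rule finite_subset[of _ "{..degree g}"]) (auto intro: le_degree)
  ultimately show ?thesis using that by blast
qed

lemma utop_factor:
  fixes a b :: "'a::idom poly poly"
  assumes u: "utop D (a * b) k"
  shows "\<exists>ka kb. ka + kb = k \<and> utop D a ka \<and> utop D b kb"
proof -
  have "a * b \<noteq> 0" using u unfolding utop_def by auto
  hence a0: "a \<noteq> 0" and b0: "b \<noteq> 0" by auto
  obtain Wa where fa: "finite {i. coeff a i \<noteq> 0 \<and> wt D a i = Wa}"
    and nea: "{i. coeff a i \<noteq> 0 \<and> wt D a i = Wa} \<noteq> {}"
    and Ma: "\<forall>i. coeff a i \<noteq> 0 \<longrightarrow> wt D a i \<le> Wa"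
    using top_set[OF a0] by blast
  obtain Wb where fb: "finite {i. coeff b i \<noteq> 0 \<and> wt D b i = Wb}"
    and neb: "{i. coeff b i \<noteq> 0 \<and> wt D b i = Wb} \<noteq> {}"
    and Mb: "\<forall>i. coeff b i \<noteq> 0 \<longrightarrow> wt D b i \<le> Wb"
    using top_set[OF b0] by blast
  define Sa where "Sa = {i. coeff a i \<noteq> 0 \<and> wt D a i = Wa}"
  define Sb where "Sb = {i. coeff b i \<noteq> 0 \<and> wt D b i = Wb}"
  define ka where "ka = Max Sa"
  define kb where "kb = Max Sb"
  define ka' where "ka' = Min Sa"
  define kb' where "kb' = Min Sb"
  have ka: "ka \<in> Sa" "\<forall>i\<in>Sa. i \<le> ka" unfolding ka_def using fa nea Sa_def[symmetric] by (auto intro: Max_in Max_ge)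
  have kb: "kb \<in> Sb" "\<forall>i\<in>Sb. i \<le> kb" unfolding kb_def using fb neb Sb_def[symmetric] by (auto intro: Max_in Max_ge)
  have ka': "ka' \<in> Sa" "\<forall>i\<in>Sa. ka' \<le> i" unfolding ka'_def using fa nea Sa_def[symmetric] by (auto intro: Min_in Min_le)
  have kb': "kb' \<in> Sb" "\<forall>i\<in>Sb. kb' \<le> i" unfolding kb'_def using fb neb Sb_def[symmetric] by (auto intro: Min_in Min_le)
  have m1: "coeff (a * b) (ka + kb) \<noteq> 0 \<and> wt D (a * b) (ka + kb) = wt D a ka + wt D b kb"
  proof (rule coeff_mult_top)
    show "coeff a ka \<noteq> 0" "coeff b kb \<noteq> 0" using ka kb Sa_def Sb_def by auto
    show "\<forall>i. coeff a i \<noteq> 0 \<longrightarrow> wt D a i \<le> wt D a ka" using Ma ka Sa_def by auto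
    show "\<forall>i. coeff b i \<noteq> 0 \<longrightarrow> wt D b i \<le> wt D b kb" using Mb kb Sb_def by auto
    show "\<forall>i l. i + l = ka + kb \<longrightarrow> i \<noteq> ka \<longrightarrow> coeff a i \<noteq> 0 \<longrightarrow> coeff b l \<noteq> 0
        \<longrightarrow> wt D a i + wt D b l < wt D a ka + wt D b kb"
    proof (intro allI impI)
      fix i l assume h: "i + l = ka + kb" "i \<noteq> ka" "coeff a i \<noteq> 0" "coeff b l \<noteq> 0"
      show "wt D a i + wt D b l < wt D a ka + wt D b kb"
      proof (cases "i > ka")
        case True
        hence "i \<notin> Sa" using ka by auto
        hence "wt D a i < Wa" using Ma h Sa_def by force
        thus ?thesis using Mb h ka kb Sa_def Sb_def by force
      next
        case False
        hence "l > kb" using h by auto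
        hence "l \<notin> Sb" using kb by auto
        hence "wt D b l < Wb" using Mb h Sb_def by force
        thus ?thesis using Ma h ka kb Sa_def Sb_def by force
      qed
    qed
  qed
  have m2: "coeff (a * b) (ka' + kb') \<noteq> 0 \<and> wt D (a * b) (ka' + kb') = wt D a ka' + wt D b kb'"
  proof (rule coeff_mult_top)
    show "coeff a ka' \<noteq> 0" "coeff b kb' \<noteq> 0" using ka' kb' Sa_def Sb_def by auto
    show "\<forall>i. coeff a i \<noteq> 0 \<longrightarrow> wt D a i \<le> wt D a ka'" using Ma ka' Sa_def by auto
    show "\<forall>i. coeff b i \<noteq> 0 \<longrightarrow> wt D b i \<le> wt D b kb'" using Mb kb' Sb_def by auto
    show "\<forall>i l. i + l = ka' + kb' \<longrightarrow> i \<noteq> ka' \<longrightarrow> coeff a i \<noteq> 0 \<longrightarrow> coeff b l \<noteq> 0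
        \<longrightarrow> wt D a i + wt D b l < wt D a ka' + wt D b kb'"
    proof (intro allI impI)
      fix i l assume h: "i + l = ka' + kb'" "i \<noteq> ka'" "coeff a i \<noteq> 0" "coeff b l \<noteq> 0"
      show "wt D a i + wt D b l < wt D a ka' + wt D b kb'"
      proof (cases "i < ka'")
        case True
        hence "i \<notin> Sa" using ka' by force
        hence "wt D a i < Wa" using Ma h Sa_def by force
        thus ?thesis using Mb h ka' kb' Sa_def Sb_def by force
      next
        case False
        hence "l < kb'" using h by auto
        hence "l \<notin> Sb" using kb' by force
        hence "wt D b l < Wb" using Mb h Sb_def by force
        thus ?thesis using Ma h ka' kb' Sa_def Sb_def by force
      qed
    qed
  qed
  have Wab: "wt D a ka = Wa" "wt D b kb = Wb" "wt D a ka' = Wa" "wt D b kb' = Wb"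
    using ka kb ka' kb' Sa_def Sb_def by auto
  have bnd: "wt D (a * b) i \<le> Wa + Wb" if "coeff (a * b) i \<noteq> 0" for i
    using coeff_mult_bound[OF Ma Mb that] .
  have uk: "coeff (a * b) k \<noteq> 0" "\<forall>i. i \<noteq> k \<and> coeff (a * b) i \<noteq> 0 \<longrightarrow> wt D (a * b) i < wt D (a * b) k"
    using u unfolding utop_def by auto
  have e1: "ka + kb = k"
  proof (rule ccontr)
    assume "ka + kb \<noteq> k"
    hence "wt D (a * b) (ka + kb) < wt D (a * b) k" using uk m1 by blast
    thus False using m1 Wab bnd[OF uk(1)] by linarith
  qed
  have e2: "ka' + kb' = k"
  proof (rule ccontr)
    assume "ka' + kb' \<noteq> k"
    hence "wt D (a * b) (ka' + kb') < wt D (a * b) k" using uk m2 by blast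
    thus False using m2 Wab bnd[OF uk(1)] by linarith
  qed
  have "ka' \<le> ka" "kb' \<le> kb" using ka ka' kb kb' by auto
  hence eq: "ka' = ka" "kb' = kb" using e1 e2 by auto
  have "utop D a ka"
    unfolding utop_def
  proof (intro conjI allI impI)
    show "coeff a ka \<noteq> 0" using ka Sa_def by auto
    fix i assume "i \<noteq> ka \<and> coeff a i \<noteq> 0"
    moreover have "i \<notin> Sa" using calculation ka(2) ka'(2) eq by force
    ultimately show "wt D a i < wt D a ka" using Ma Sa_def Wab by force
  qed
  moreover have "utop D b kb"
    unfolding utop_def
  proof (intro conjI allI impI)
    show "coeff b kb \<noteq> 0" using kb Sb_def by auto
    fix i assume "i \<noteq> kb \<and> coeff b i \<noteq> 0"
    moreover have "i \<notin> Sb" using calculation kb(2) kb'(2) eq by force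
    ultimately show "wt D b i < wt D b kb" using Mb Sb_def Wab by force
  qed
  ultimately show ?thesis using e1 by blast
qed


lemma main_fact:
  fixes f :: "'a::idom poly poly"
  assumes hc: "\<forall>c. [:c:] dvd f \<longrightarrow> c = 0 \<or> c dvd 1"
    and f0: "coeff f 0 \<noteq> 0" and D: "D = degree (lead_coeff f)"
  shows "g dvd f \<Longrightarrow> 1 \<le> degree g \<Longrightarrow> utop D g k \<Longrightarrow>
    k < degree g \<and> (\<exists>fs. g = prod_list fs \<and> (\<forall>x\<in>set fs. irreducible x) \<and> length fs \<le> degree g - k)"
proof (induction "degree g" arbitrary: g k rule: less_induct)
  case less
  obtain h where fgh: "f = g * h" using less.prems(1) by (auto elim: dvdE)
  have fn0: "f \<noteq> 0" using f0 by auto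
  hence g0: "g \<noteq> 0" and h0: "h \<noteq> 0" using fgh by auto
  have cg0: "coeff g 0 \<noteq> 0" using f0 fgh by (simp add: coeff_mult_0)
  have "lead_coeff f = lead_coeff g * lead_coeff h" using fgh by (simp add: lead_coeff_mult)
  hence "degree (lead_coeff f) = degree (lead_coeff g) + degree (lead_coeff h)"
    using g0 h0 by (simp add: degree_mult_eq)
  hence eD: "degree (lead_coeff g) \<le> D" using D by simp
  have ck: "coeff g k \<noteq> 0" using less.prems(3) unfolding utop_def by auto
  hence kle: "k \<le> degree g" by (simp add: le_degree)
  have klt: "k < degree g"
  proof (rule ccontr)
    assume "\<not> k < degree g"
    hence kd: "k = degree g" using kle by simp
    hence "0 \<noteq> k" using less.prems(2) by simp
    hence "wt D g 0 < wt D g k" using less.prems(3) cg0 unfolding utop_def by blast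
    hence "int (degree (coeff g 0)) < int (degree (lead_coeff g)) - int (degree g) * int D"
      unfolding wt_def kd by simp
    moreover have "D \<le> degree g * D" using less.prems(2) by simp
    hence "int D \<le> int (degree g) * int D" by (metis of_nat_le_iff of_nat_mult)
    ultimately show False using eD by linarith
  qed
  show ?case
  proof (cases "irreducible g")
    case True
    thus ?thesis using klt by (intro conjI exI[of _ "[g]"]) auto
  next
    case False
    have "\<not> g dvd 1"
    proof
      assume "g dvd 1"
      then obtain q where q: "1 = g * q" by (auto elim: dvdE)
      hence "q \<noteq> 0" by auto
      hence "degree (g * q) = degree g + degree q" using g0 by (simp add: degree_mult_eq)
      thus False using q less.prems(2) by (metis add_is_0 degree_1 not_one_le_zero)
    qed
    then obtain a b where gab: "g = a * b" and na: "\<not> a dvd 1" and nb: "\<not> b dvd 1"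
      using False g0 unfolding irreducible_def by blast
    have a0: "a \<noteq> 0" and b0: "b \<noteq> 0" using gab g0 by auto
    have adv: "a dvd f" and bdv: "b dvd f" using gab less.prems(1) dvd_trans by auto
    have pos: "1 \<le> degree p" if "p dvd f" "p \<noteq> 0" "\<not> p dvd 1" for p
    proof (rule ccontr)
      assume "\<not> 1 \<le> degree p"
      hence "degree p = 0" by simp
      hence pc: "p = [:coeff p 0:]" using degree_0_id by metis
      hence "coeff p 0 \<noteq> 0" using that(2) by (metis pCons_0_0)
      hence "(coeff p 0) dvd 1" using hc that(1) pc by metis
      hence "p dvd 1" using pc by (metis is_unit_const_poly_iff)
      thus False using that(3) by simp
    qed
    have da: "1 \<le> degree a" and db: "1 \<le> degree b" using pos adv bdv a0 b0 na nb by auto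
    have dg: "degree g = degree a + degree b" using gab a0 b0 by (simp add: degree_mult_eq)
    obtain ka kb where kk: "ka + kb = k" "utop D a ka" "utop D b kb"
      using utop_factor[of D a b k] less.prems(3) gab by blast
    have "degree a < degree g" "degree b < degree g" using dg da db by auto
    then obtain fa fb where
      IA: "ka < degree a" "a = prod_list fa" "\<forall>x\<in>set fa. irreducible x" "length fa \<le> degree a - ka"
      and IB: "kb < degree b" "b = prod_list fb" "\<forall>x\<in>set fb. irreducible x" "length fb \<le> degree b - kb"
      using less.hyps[OF _ adv da kk(2)] less.hyps[OF _ bdv db kk(3)] by blast
    have "g = prod_list (fa @ fb)" using gab IA IB by simp
    moreover have "\<forall>x\<in>set (fa @ fb). irreducible x" using IA IB by auto
    moreover have "length (fa @ fb) \<le> degree g - k" using IA IB dg kk(1) by simp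
    ultimately show ?thesis using klt by blast
  qed
qed


theorem theorem10:
  fixes f :: "('k::field, 'v::{finite,linorder}) mpoly' poly poly"
    and n j :: nat
  assumes "n = degree f" and "n \<ge> 2"
    and "coeff f 0 * coeff f n \<noteq> 0"
    and "\<forall>d. [:d:] dvd f \<longrightarrow> d \<in> range const_D"
    and "j \<le> n - 1"
    and "coeff f j \<noteq> 0"
    and "\<forall>i\<le>n. i \<noteq> j \<and> coeff f i \<noteq> 0 \<longrightarrow>
           int (degree (coeff f j)) >
           int (degree (coeff f i)) + (int j - int i) * int (degree (coeff f n))"
  shows "\<exists>fs. f = prod_list fs \<and> (\<forall>g\<in>set fs. irreducible g) \<and> length fs \<le> n - j"
proof -
  have hc: "\<forall>c. [:c:] dvd f \<longrightarrow> c = 0 \<or> c dvd 1"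
  proof (intro allI impI)
    fix c assume "[:c:] dvd f"
    then obtain x where cx: "c = const_D x" using assms(4) by blast
    show "c = 0 \<or> c dvd 1"
    proof (cases "x = 0")
      case True
      thus ?thesis using cx by (simp add: const_D_def)
    next
      case False
      have "Poly_Mapping.single 0 x * Poly_Mapping.single 0 (inverse x) = (1 :: ('k, 'v) mpoly')"
        using False by (simp add: mult_single single_one)
      hence "Poly_Mapping.single 0 x dvd (1 :: ('k, 'v) mpoly')" by (metis dvdI)
      hence "c dvd 1" using cx unfolding const_D_def by (simp add: is_unit_const_poly_iff)
      thus ?thesis by simp
    qed
  qed
  have f0: "coeff f 0 \<noteq> 0" using assms(3) by auto
  define D where "D = degree (lead_coeff f)"
  have Dn: "D = degree (coeff f n)" using assms(1) D_def by simp
  have ut: "utop D f j"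
    unfolding utop_def
  proof (intro conjI allI impI)
    show "coeff f j \<noteq> 0" using assms(6) .
    fix i assume i: "i \<noteq> j \<and> coeff f i \<noteq> 0"
    hence "i \<le> n" using assms(1) by (simp add: le_degree)
    hence "int (degree (coeff f j)) > int (degree (coeff f i)) + (int j - int i) * int D"
      using assms(7) i Dn by blast
    thus "wt D f i < wt D f j" unfolding wt_def by (simp add: algebra_simps)
  qed
  have "1 \<le> degree f" using assms(1,2) by simp
  from main_fact[OF hc f0 D_def dvd_refl this ut] assms(1) show ?thesis by auto
qed

end
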